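(* Let $\kappa=(\xi,\eta)\in S\mathbb{H}$. Then the tangent space to $S\mathbb{H}$ at $\kappa$ is $$T_\kappa S\mathbb{H}=\{(\alpha,\beta)\in\mathbb{H}^2:\alpha\bar\eta+\xi\bar\beta\in\mathcal{V}\},$$ and it decomposes into orthogonal real subspaces as $$T_\kappa S\mathbb{H}=\kappa\mathbb{H}\oplus\check\kappa\mathcal{V}=\kappa\mathbb{R}\oplus\kappa\mathbb{I}\oplus\check\kappa\mathcal{V}.$$
   Context: For $q=a+bi+cj+dk\in\mathbb{H}$, $q'=a-bi-cj+dk$, $\bar q=a-bi-cj-dk$. $\mathbb{I}=\mathrm{span}_\mathbb{R}\{i,j,k\}$, $\mathcal{V}=\mathrm{span}_\mathbb{R}\{1,i,j\}$. $S\mathbb{H}=\{(\xi,\eta)\in\mathbb{H}^2\setminus\{(0,0)\}:\xi\bar\eta\in\mathcal{V}\}$, a smooth submanifold of $\mathbb{H}^2$. For $\kappa=(\xi,\eta)$, $\check\kappa=(\eta',-\xi')$, and $\kappa X=\{(\xi x,\eta x):x\in X\}$. Orthogonality is with respect to the real inner product $\langle\kappa_1,\kappa_2\rangle=\mathrm{Re}(\xi_1\bar\xi_2+\eta_1\bar\eta_2)$ on $\mathbb{H}^2$. *)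

theory Defs
  imports "HOL-Analysis.Analysis"
begin

text \<open>Quaternions q = a + b i + c j + d k are represented as tuples (a,b,c,d) of reals.
  The product type carries the Euclidean inner product, which on quaternions is Re(q1 * conj q2);
  on pairs of quaternions (the type quat \<times> quat) it is Re(xi1 conj xi2 + eta1 conj eta2).\<close>

type_synonym quat = "real \<times> real \<times> real \<times> real"

definition qmult :: "quat \<Rightarrow> quat \<Rightarrow> quat" (infixl "\<star>" 70) where
  "qmult p q = (case p of (a1,b1,c1,d1) \<Rightarrow> case q of (a2,b2,c2,d2) \<Rightarrow>
     (a1*a2 - b1*b2 - c1*c2 - d1*d2,
      a1*b2 + b1*a2 + c1*d2 - d1*c2,
      a1*c2 - b1*d2 + c1*a2 + d1*b2,
      a1*d2 + b1*c2 - c1*b2 + d1*a2))"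

definition qcnj :: "quat \<Rightarrow> quat" where
  "qcnj q = (case q of (a,b,c,d) \<Rightarrow> (a,-b,-c,-d))"

definition qprime :: "quat \<Rightarrow> quat" where
  "qprime q = (case q of (a,b,c,d) \<Rightarrow> (a,-b,-c,d))"

definition qReals :: "quat set" where "qReals = {(a,0,0,0) | a. True}"
definition qImag :: "quat set" where "qImag = {(0,b,c,d) | b c d. True}"
definition qV :: "quat set" where "qV = {(a,b,c,0) | a b c. True}"

definition SH :: "(quat \<times> quat) set" where
  "SH = {(\<xi>,\<eta>). (\<xi>,\<eta>) \<noteq> (0,0) \<and> \<xi> \<star> qcnj \<eta> \<in> qV}"

definition rmul_set :: "quat \<times> quat \<Rightarrow> quat set \<Rightarrow> (quat \<times> quat) set" where
  "rmul_set \<kappa> X = {(fst \<kappa> \<star> x, snd \<kappa> \<star> x) | x. x \<in> X}"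

definition kcheck :: "quat \<times> quat \<Rightarrow> quat \<times> quat" where
  "kcheck \<kappa> = (qprime (snd \<kappa>), - qprime (fst \<kappa>))"

definition tangent_space :: "'a::real_normed_vector set \<Rightarrow> 'a \<Rightarrow> 'a set" where
  "tangent_space S p = {v. \<exists>\<gamma> e. e > 0 \<and> \<gamma> 0 = p \<and> (\<forall>t. \<bar>t\<bar> < e \<longrightarrow> \<gamma> t \<in> S)
      \<and> (\<gamma> has_vector_derivative v) (at (0::real))}"

end

theory Submission
  imports Defs
begin

definition G :: "quat \<times> quat \<Rightarrow> real" where
 "G p = - fst(fst p) * snd(snd(snd(snd p))) - fst(snd(fst p)) * fst(snd(snd(snd p)))
        + fst(snd(snd(fst p))) * fst(snd(snd p)) + snd(snd(snd(fst p))) * fst(snd p)"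

lemma qV_iff: "q \<in> qV \<longleftrightarrow> snd (snd (snd q)) = 0"
  by (cases q rule: prod_cases4) (auto simp: qV_def)

lemma G_eq: "G (x, y) = snd (snd (snd (x \<star> qcnj y)))"
  by (cases x rule: prod_cases4; cases y rule: prod_cases4) (simp add: G_def qmult_def qcnj_def)

lemma SH_iff: "p \<in> SH \<longleftrightarrow> p \<noteq> 0 \<and> G p = 0"
  by (cases p) (auto simp: SH_def G_eq qV_iff zero_prod_def)

lemma qmult_add_right: "p \<star> (x + y) = p \<star> x + p \<star> y"
  by (cases p rule: prod_cases4; cases x rule: prod_cases4; cases y rule: prod_cases4)
     (simp add: qmult_def algebra_simps)

lemma L2: "G (a \<star> x, b \<star> x) = (x \<bullet> x) * G (a, b)"
  by (cases a rule: prod_cases4; cases b rule: prod_cases4; cases x rule: prod_cases4)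
     (simp add: G_def qmult_def inner_Pair algebra_simps power2_eq_square; algebra)

lemma L3:
  fixes x1 x2 x3 x4 y1 y2 y3 y4 p q r t :: real
  shows "G ((x1,x2,x3,x4) + t *\<^sub>R (qprime (y1,y2,y3,y4) \<star> (p,q,r,0)), (y1,y2,y3,y4) + t *\<^sub>R ((- qprime (x1,x2,x3,x4)) \<star> (p,q,r,0)))
     = (1 + t^2 * (p^2+q^2+r^2)) * G ((x1,x2,x3,x4), (y1,y2,y3,y4))"
  apply (simp add: G_def qmult_def qprime_def)
  by algebra

lemma L1:
  fixes \<xi> \<eta> h w :: quat
  shows "(\<xi>, \<eta>) + t *\<^sub>R ((\<xi> \<star> h, \<eta> \<star> h) + (qprime \<eta> \<star> w, (- qprime \<xi>) \<star> w))
           + t^2 *\<^sub>R (qprime \<eta> \<star> w \<star> h, (- qprime \<xi>) \<star> w \<star> h)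
     = ((\<xi> + t *\<^sub>R (qprime \<eta> \<star> w)) \<star> ((1,0,0,0) + t *\<^sub>R h),
        (\<eta> + t *\<^sub>R ((- qprime \<xi>) \<star> w)) \<star> ((1,0,0,0) + t *\<^sub>R h))"
  apply (cases \<xi> rule: prod_cases4; cases \<eta> rule: prod_cases4; cases h rule: prod_cases4; cases w rule: prod_cases4)
  by (simp add: qmult_def qprime_def power2_eq_square algebra_simps)
lemma U1:
  fixes x1 x2 x3 x4 y1 y2 y3 y4 a1 a2 a3 a4 b1 b2 b3 b4 :: real
  assumes "G ((x1,x2,x3,x4), (y1,y2,y3,y4)) = 0"
  shows "(x1,x2,x3,x4) \<star> (qcnj (x1,x2,x3,x4) \<star> (a1,a2,a3,a4) + qcnj (y1,y2,y3,y4) \<star> (b1,b2,b3,b4))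
     + qprime (y1,y2,y3,y4) \<star> (qcnj (qprime (y1,y2,y3,y4)) \<star> (a1,a2,a3,a4) - qcnj (qprime (x1,x2,x3,x4)) \<star> (b1,b2,b3,b4))
     = (x1^2+x2^2+x3^2+x4^2+y1^2+y2^2+y3^2+y4^2) *\<^sub>R (a1,a2,a3,a4)"
  using assms
  apply (simp add: G_def qmult_def qprime_def qcnj_def)
  by (intro conjI; algebra)

lemma U2:
  fixes x1 x2 x3 x4 y1 y2 y3 y4 a1 a2 a3 a4 b1 b2 b3 b4 :: real
  assumes "G ((x1,x2,x3,x4), (y1,y2,y3,y4)) = 0"
  shows "(y1,y2,y3,y4) \<star> (qcnj (x1,x2,x3,x4) \<star> (a1,a2,a3,a4) + qcnj (y1,y2,y3,y4) \<star> (b1,b2,b3,b4))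
     + (- qprime (x1,x2,x3,x4)) \<star> (qcnj (qprime (y1,y2,y3,y4)) \<star> (a1,a2,a3,a4) - qcnj (qprime (x1,x2,x3,x4)) \<star> (b1,b2,b3,b4))
     = (x1^2+x2^2+x3^2+x4^2+y1^2+y2^2+y3^2+y4^2) *\<^sub>R (b1,b2,b3,b4)"
  using assms
  apply (simp add: G_def qmult_def qprime_def qcnj_def)
  by (intro conjI; algebra)

lemma U3:
  fixes \<xi> \<eta> \<alpha> \<beta> :: quat
  shows "snd (snd (snd (qcnj (qprime \<eta>) \<star> \<alpha> - qcnj (qprime \<xi>) \<star> \<beta>))) =
     snd (snd (snd (\<alpha> \<star> qcnj \<eta> + \<xi> \<star> qcnj \<beta>)))"
  by (cases \<xi> rule: prod_cases4; cases \<eta> rule: prod_cases4; cases \<alpha> rule: prod_cases4; cases \<beta> rule: prod_cases4)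
     (simp add: qmult_def qprime_def qcnj_def algebra_simps)

lemma qmult_scaleR_right: "p \<star> (c *\<^sub>R x) = c *\<^sub>R (p \<star> x)"
  by (cases p rule: prod_cases4; cases x rule: prod_cases4) (simp add: qmult_def algebra_simps)

lemma orth:
  fixes x1 x2 x3 x4 y1 y2 y3 y4 a1 a2 a3 a4 b1 b2 b3 b4 :: real
  assumes "G ((x1,x2,x3,x4), (y1,y2,y3,y4)) = 0"
  shows "inner (((x1,x2,x3,x4) \<star> (a1,a2,a3,a4)), ((y1,y2,y3,y4) \<star> (a1,a2,a3,a4)))
     (qprime (y1,y2,y3,y4) \<star> (b1,b2,b3,b4), (- qprime (x1,x2,x3,x4)) \<star> (b1,b2,b3,b4)) = 0"
  using assms
  apply (simp add: qmult_def qprime_def G_def)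
  by algebra

lemma orth2:
  fixes \<xi> \<eta> :: quat and a b c d :: real
  shows "inner (\<xi> \<star> (a,0,0,0), \<eta> \<star> (a,0,0,0)) (\<xi> \<star> (0,b,c,d), \<eta> \<star> (0,b,c,d)) = 0"
  by (cases \<xi> rule: prod_cases4; cases \<eta> rule: prod_cases4) (simp add: qmult_def algebra_simps)



lemma stepA:
  fixes \<xi> \<eta> :: quat
  assumes "v \<in> tangent_space SH (\<xi>, \<eta>)"
  shows "G (fst v, \<eta>) + G (\<xi>, snd v) = 0"
proof -
  obtain \<gamma> e where e: "e > 0" "\<gamma> 0 = (\<xi>, \<eta>)" "\<forall>t. \<bar>t\<bar> < e \<longrightarrow> \<gamma> t \<in> SH"
    and d: "(\<gamma> has_vector_derivative v) (at (0::real))"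
    using assms unfolding tangent_space_def by blast
  define g where "g t = G (\<gamma> t)" for t
  have d': "(\<gamma> has_derivative (\<lambda>s. s *\<^sub>R v)) (at 0)"
    using d by (simp add: has_vector_derivative_def)
  have "(g has_derivative (\<lambda>s. s * (G (fst v, \<eta>) + G (\<xi>, snd v)))) (at 0)"
    unfolding g_def G_def
    apply (rule derivative_eq_intros d' | simp)+
    using e(2) by (auto simp: algebra_simps)
  note D0 = this
  have D1: "(g has_field_derivative (G (fst v, \<eta>) + G (\<xi>, snd v))) (at 0)"
  proof -
    have "(\<lambda>s. s * (G (fst v, \<eta>) + G (\<xi>, snd v))) = (*) (G (fst v, \<eta>) + G (\<xi>, snd v))"
      by (auto simp: fun_eq_iff)
    then show ?thesis using D0 by (simp add: has_field_derivative_def)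
  qed
  have ev: "eventually (\<lambda>t. g t = 0) (nhds 0)"
    unfolding eventually_nhds
    apply (rule exI[of _ "{-e<..<e}"])
    using e by (auto simp: g_def SH_iff)
  have "(g has_field_derivative (G (fst v, \<eta>) + G (\<xi>, snd v))) (at 0) \<longleftrightarrow>
        ((\<lambda>t. 0::real) has_field_derivative (G (fst v, \<eta>) + G (\<xi>, snd v))) (at 0)"
    by (rule DERIV_cong_ev[OF refl ev refl])
  with D1 have "((\<lambda>t. 0::real) has_field_derivative (G (fst v, \<eta>) + G (\<xi>, snd v))) (at 0)" by simp
  then show ?thesis using DERIV_const DERIV_unique by blast
qed


lemma stepB:
  fixes \<xi> \<eta> h w :: quat
  assumes SH: "(\<xi>, \<eta>) \<in> SH" and wV: "w \<in> qV"
  shows "(\<xi> \<star> h, \<eta> \<star> h) + (qprime \<eta> \<star> w, (- qprime \<xi>) \<star> w) \<in> tangent_space SH (\<xi>, \<eta>)"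
proof -
  obtain x1 x2 x3 x4 where \<xi>_def: "\<xi> = (x1,x2,x3,x4)" by (cases \<xi> rule: prod_cases4)
  obtain y1 y2 y3 y4 where \<eta>_def: "\<eta> = (y1,y2,y3,y4)" by (cases \<eta> rule: prod_cases4)
  obtain p q r where w_def: "w = (p,q,r,0)" using wV by (auto simp: qV_def)
  define v where "v = (\<xi> \<star> h, \<eta> \<star> h) + (qprime \<eta> \<star> w, (- qprime \<xi>) \<star> w)"
  define c where "c = (qprime \<eta> \<star> w \<star> h, (- qprime \<xi>) \<star> w \<star> h)"
  define \<gamma> where "\<gamma> t = (\<xi>, \<eta>) + t *\<^sub>R v + t^2 *\<^sub>R c" for t :: real
  define e where "e = min 1 (norm (\<xi>, \<eta>) / (norm v + norm c + 1))"
  have G0: "G ((x1,x2,x3,x4), (y1,y2,y3,y4)) = 0" and nz: "(\<xi>, \<eta>) \<noteq> 0"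
    using SH by (auto simp: SH_iff \<xi>_def \<eta>_def)
  have npos: "norm (\<xi>, \<eta>) > 0" using nz by simp
  have epos: "e > 0" unfolding e_def using npos
    by (simp add: add_nonneg_pos)
  have "(\<gamma> has_vector_derivative v) (at 0)"
    unfolding \<gamma>_def
    by (auto intro!: derivative_eq_intros)
  moreover have "\<gamma> 0 = (\<xi>, \<eta>)" by (simp add: \<gamma>_def)
  moreover have "\<gamma> t \<in> SH" if t: "\<bar>t\<bar> < e" for t
  proof -
    have "\<gamma> t = ((\<xi> + t *\<^sub>R (qprime \<eta> \<star> w)) \<star> ((1,0,0,0) + t *\<^sub>R h),
        (\<eta> + t *\<^sub>R ((- qprime \<xi>) \<star> w)) \<star> ((1,0,0,0) + t *\<^sub>R h))"
      unfolding \<gamma>_def v_def c_def by (rule L1)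
    then have "G (\<gamma> t) = (((1,0,0,0) + t *\<^sub>R h) \<bullet> ((1,0,0,0) + t *\<^sub>R h)) *
       G (\<xi> + t *\<^sub>R (qprime \<eta> \<star> w), \<eta> + t *\<^sub>R ((- qprime \<xi>) \<star> w))"
      by (simp only: L2)
    also have "G (\<xi> + t *\<^sub>R (qprime \<eta> \<star> w), \<eta> + t *\<^sub>R ((- qprime \<xi>) \<star> w)) = 0"
      unfolding \<xi>_def \<eta>_def w_def L3 G0 by simp
    finally have "G (\<gamma> t) = 0" by simp
    moreover have "\<gamma> t \<noteq> 0"
    proof
      assume z: "\<gamma> t = 0"
      have t1: "\<bar>t\<bar> < 1" and t2: "\<bar>t\<bar> * (norm v + norm c + 1) < norm (\<xi>, \<eta>)"
        using t unfolding e_def by (auto simp: pos_less_divide_eq add_nonneg_pos)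
      have "(\<xi>, \<eta>) + (t *\<^sub>R v + t^2 *\<^sub>R c) = 0"
        using z unfolding \<gamma>_def by (metis add.assoc)
      then have "(\<xi>, \<eta>) = - (t *\<^sub>R v + t^2 *\<^sub>R c)"
        by (rule eq_neg_iff_add_eq_0[THEN iffD2])
      then have "norm (\<xi>, \<eta>) = norm (t *\<^sub>R v + t^2 *\<^sub>R c)" by (metis norm_minus_cancel)
      also have "\<dots> \<le> \<bar>t\<bar> * norm v + t^2 * norm c"
        using norm_triangle_ineq[of "t *\<^sub>R v" "t^2 *\<^sub>R c"] by simp
      also have "\<dots> \<le> \<bar>t\<bar> * norm v + \<bar>t\<bar> * norm c"
      proof -
        have "\<bar>t\<bar> * \<bar>t\<bar> \<le> \<bar>t\<bar> * 1" by (rule mult_left_mono) (use t1 in auto)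
        then have "t^2 \<le> \<bar>t\<bar>" by (simp add: power2_eq_square abs_mult_self_eq)
        then show ?thesis by (simp add: mult_right_mono)
      qed
      also have "\<dots> \<le> \<bar>t\<bar> * (norm v + norm c + 1)" by (simp add: algebra_simps)
      finally show False using t2 by simp
    qed
    ultimately show ?thesis by (simp add: SH_iff)
  qed
  ultimately show ?thesis unfolding tangent_space_def v_def[symmetric] mem_Collect_eq
    using epos by (intro exI[of _ \<gamma>] exI[of _ e]) auto
qed


lemma stepC:
  fixes \<xi> \<eta> \<alpha> \<beta> :: quat
  assumes SH: "(\<xi>, \<eta>) \<in> SH"
    and K: "\<alpha> \<star> qcnj \<eta> + \<xi> \<star> qcnj \<beta> \<in> qV"
  shows "\<exists>h w. w \<in> qV \<and> (\<alpha>, \<beta>) = (\<xi> \<star> h, \<eta> \<star> h) + (qprime \<eta> \<star> w, (- qprime \<xi>) \<star> w)"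
proof -
  obtain x1 x2 x3 x4 where \<xi>_def: "\<xi> = (x1,x2,x3,x4)" by (cases \<xi> rule: prod_cases4)
  obtain y1 y2 y3 y4 where \<eta>_def: "\<eta> = (y1,y2,y3,y4)" by (cases \<eta> rule: prod_cases4)
  obtain a1 a2 a3 a4 where a: "\<alpha> = (a1,a2,a3,a4)" by (cases \<alpha> rule: prod_cases4)
  obtain b1 b2 b3 b4 where b: "\<beta> = (b1,b2,b3,b4)" by (cases \<beta> rule: prod_cases4)
  have G0: "G ((x1,x2,x3,x4), (y1,y2,y3,y4)) = 0" and nz: "(\<xi>, \<eta>) \<noteq> 0"
    using SH by (auto simp: SH_iff \<xi>_def \<eta>_def)
  define N where "N = x1^2+x2^2+x3^2+x4^2+y1^2+y2^2+y3^2+y4^2"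
  have "N = (\<xi>, \<eta>) \<bullet> (\<xi>, \<eta>)" unfolding N_def \<xi>_def \<eta>_def by (simp add: power2_eq_square)
  then have Npos: "N > 0" using nz by (metis inner_gt_zero_iff)
  define H where "H = qcnj \<xi> \<star> \<alpha> + qcnj \<eta> \<star> \<beta>"
  define W where "W = qcnj (qprime \<eta>) \<star> \<alpha> - qcnj (qprime \<xi>) \<star> \<beta>"
  have e1: "\<xi> \<star> H + qprime \<eta> \<star> W = N *\<^sub>R \<alpha>"
    unfolding H_def W_def N_def \<xi>_def \<eta>_def a b by (rule U1[OF G0])
  have e2: "\<eta> \<star> H + (- qprime \<xi>) \<star> W = N *\<^sub>R \<beta>"
    unfolding H_def W_def N_def \<xi>_def \<eta>_def a b by (rule U2[OF G0])
  have "snd (snd (snd W)) = 0"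
    using K unfolding W_def U3 qV_iff .
  then have wV: "(1/N) *\<^sub>R W \<in> qV" by (simp add: qV_iff)
  have "(\<alpha>, \<beta>) = (\<xi> \<star> ((1/N) *\<^sub>R H), \<eta> \<star> ((1/N) *\<^sub>R H))
        + (qprime \<eta> \<star> ((1/N) *\<^sub>R W), (- qprime \<xi>) \<star> ((1/N) *\<^sub>R W))"
    unfolding qmult_scaleR_right
    using Npos by (simp add: scaleR_right_distrib[symmetric] e1 e2)
  then show ?thesis using wV by blast
qed


lemma orthG:
  fixes \<xi> \<eta> x w :: quat
  assumes "G (\<xi>, \<eta>) = 0"
  shows "inner (\<xi> \<star> x, \<eta> \<star> x) (qprime \<eta> \<star> w, (- qprime \<xi>) \<star> w) = 0"
  using assms
  by (cases \<xi> rule: prod_cases4; cases \<eta> rule: prod_cases4; cases x rule: prod_cases4; cases w rule: prod_cases4)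
     (simp only: orth)

lemma rmul_UNIV: "u \<in> rmul_set (\<xi>, \<eta>) X \<longleftrightarrow> (\<exists>x\<in>X. u = (\<xi> \<star> x, \<eta> \<star> x))"
  by (auto simp: rmul_set_def)

lemma rmul_check: "u \<in> rmul_set (kcheck (\<xi>, \<eta>)) X \<longleftrightarrow> (\<exists>x\<in>X. u = (qprime \<eta> \<star> x, (- qprime \<xi>) \<star> x))"
  by (auto simp: rmul_set_def kcheck_def)

theorem lemma3p11:
  fixes \<xi> \<eta> :: quat
  assumes "(\<xi>, \<eta>) \<in> SH"
  defines "\<kappa> \<equiv> (\<xi>, \<eta>)"
  shows "(tangent_space SH \<kappa> = {(\<alpha>, \<beta>). \<alpha> \<star> qcnj \<eta> + \<xi> \<star> qcnj \<beta> \<in> qV}) \<and>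
    (tangent_space SH \<kappa> = {u + v | u v. u \<in> rmul_set \<kappa> UNIV \<and> v \<in> rmul_set (kcheck \<kappa>) qV}) \<and>
    (\<forall>u \<in> rmul_set \<kappa> UNIV. \<forall>v \<in> rmul_set (kcheck \<kappa>) qV. inner u v = 0) \<and>
    (tangent_space SH \<kappa> = {u + v + w | u v w. u \<in> rmul_set \<kappa> qReals
            \<and> v \<in> rmul_set \<kappa> qImag \<and> w \<in> rmul_set (kcheck \<kappa>) qV}) \<and>
    (\<forall>u \<in> rmul_set \<kappa> qReals. \<forall>v \<in> rmul_set \<kappa> qImag. inner u v = 0) \<and>
    (\<forall>u \<in> rmul_set \<kappa> qReals. \<forall>w \<in> rmul_set (kcheck \<kappa>) qV. inner u w = 0) \<and>
    (\<forall>v \<in> rmul_set \<kappa> qImag. \<forall>w \<in> rmul_set (kcheck \<kappa>) qV. inner v w = 0)"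
proof -
  obtain x1 x2 x3 x4 where \<xi>: "\<xi> = (x1,x2,x3,x4)" by (cases \<xi> rule: prod_cases4)
  obtain y1 y2 y3 y4 where \<eta>: "\<eta> = (y1,y2,y3,y4)" by (cases \<eta> rule: prod_cases4)
  have G0: "G (\<xi>, \<eta>) = 0" using assms(1) by (simp add: SH_iff)
  define K where "K = {(\<alpha>, \<beta>). \<alpha> \<star> qcnj \<eta> + \<xi> \<star> qcnj \<beta> \<in> qV}"
  define D where "D = {u + v | u v. u \<in> rmul_set \<kappa> UNIV \<and> v \<in> rmul_set (kcheck \<kappa>) qV}"
  define D4 where "D4 = {u + v + w | u v w. u \<in> rmul_set \<kappa> qReals
            \<and> v \<in> rmul_set \<kappa> qImag \<and> w \<in> rmul_set (kcheck \<kappa>) qV}"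
  have TK: "tangent_space SH \<kappa> \<subseteq> K"
  proof
    fix v assume "v \<in> tangent_space SH \<kappa>"
    then have "G (fst v, \<eta>) + G (\<xi>, snd v) = 0" unfolding \<kappa>_def by (rule stepA)
    then show "v \<in> K" unfolding K_def by (cases v) (simp add: qV_iff G_eq)
  qed
  have DT: "D \<subseteq> tangent_space SH \<kappa>"
  proof
    fix u assume "u \<in> D"
    then obtain h w where w: "w \<in> qV" and u: "u = (\<xi> \<star> h, \<eta> \<star> h) + (qprime \<eta> \<star> w, (- qprime \<xi>) \<star> w)"
      unfolding D_def \<kappa>_def rmul_UNIV rmul_check by blast
    show "u \<in> tangent_space SH \<kappa>"
      using stepB[OF assms(1) w, of h] unfolding u \<kappa>_def .
  qed
  have KD: "K \<subseteq> D"
  proof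
    fix v assume "v \<in> K"
    then obtain \<alpha> \<beta> where v: "v = (\<alpha>, \<beta>)" and K: "\<alpha> \<star> qcnj \<eta> + \<xi> \<star> qcnj \<beta> \<in> qV"
      unfolding K_def by blast
    obtain h w where "w \<in> qV" "(\<alpha>, \<beta>) = (\<xi> \<star> h, \<eta> \<star> h) + (qprime \<eta> \<star> w, (- qprime \<xi>) \<star> w)"
      using stepC[OF assms(1) K] by blast
    then show "v \<in> D" unfolding D_def \<kappa>_def rmul_UNIV rmul_check v by blast
  qed
  have TS: "tangent_space SH \<kappa> = K" "tangent_space SH \<kappa> = D"
    using TK DT KD by auto
  have O3: "\<forall>u \<in> rmul_set \<kappa> X. \<forall>v \<in> rmul_set (kcheck \<kappa>) qV. inner u v = 0" for X
  proof (intro ballI)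
    fix u v assume "u \<in> rmul_set \<kappa> X" "v \<in> rmul_set (kcheck \<kappa>) qV"
    then obtain x w where "u = (\<xi> \<star> x, \<eta> \<star> x)" "v = (qprime \<eta> \<star> w, (- qprime \<xi>) \<star> w)"
      unfolding \<kappa>_def rmul_UNIV rmul_check by blast
    then show "inner u v = 0" using orthG[OF G0] by simp
  qed
  have O5: "\<forall>u \<in> rmul_set \<kappa> qReals. \<forall>v \<in> rmul_set \<kappa> qImag. inner u v = 0"
  proof (intro ballI)
    fix u v assume "u \<in> rmul_set \<kappa> qReals" "v \<in> rmul_set \<kappa> qImag"
    then obtain a b c d where "u = (\<xi> \<star> (a,0,0,0), \<eta> \<star> (a,0,0,0))" "v = (\<xi> \<star> (0,b,c,d), \<eta> \<star> (0,b,c,d))"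
      unfolding \<kappa>_def rmul_UNIV qReals_def qImag_def by blast
    then show "inner u v = 0" using orth2 by simp
  qed
  have DD4: "D = D4"
  proof
    show "D \<subseteq> D4"
    proof
      fix u assume "u \<in> D"
      then obtain x v where v: "v \<in> rmul_set (kcheck \<kappa>) qV" and u: "u = (\<xi> \<star> x, \<eta> \<star> x) + v"
        unfolding D_def \<kappa>_def rmul_UNIV by blast
      obtain a b c d where x: "x = (a,b,c,d)" by (cases x rule: prod_cases4)
      have f1: "(\<xi> \<star> x, \<eta> \<star> x) = (\<xi> \<star> (a,0,0,0), \<eta> \<star> (a,0,0,0)) + (\<xi> \<star> (0,b,c,d), \<eta> \<star> (0,b,c,d))"
        unfolding x by (simp add: qmult_add_right[symmetric])
      have f2: "(\<xi> \<star> (a,0,0,0), \<eta> \<star> (a,0,0,0)) \<in> rmul_set \<kappa> qReals"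
        unfolding \<kappa>_def rmul_UNIV qReals_def by blast
      have f3: "(\<xi> \<star> (0,b,c,d), \<eta> \<star> (0,b,c,d)) \<in> rmul_set \<kappa> qImag"
        unfolding \<kappa>_def rmul_UNIV qImag_def by blast
      show "u \<in> D4" unfolding D4_def u
        apply (rule CollectI, rule exI[of _ "(\<xi> \<star> (a,0,0,0), \<eta> \<star> (a,0,0,0))"],
              rule exI[of _ "(\<xi> \<star> (0,b,c,d), \<eta> \<star> (0,b,c,d))"], rule exI[of _ v])
        using f1 f2 f3 v by simp
    qed
  next
    show "D4 \<subseteq> D"
    proof
      fix u assume "u \<in> D4"
      then obtain x y v where v: "v \<in> rmul_set (kcheck \<kappa>) qV"
        and u: "u = (\<xi> \<star> x, \<eta> \<star> x) + (\<xi> \<star> y, \<eta> \<star> y) + v"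
        unfolding D4_def \<kappa>_def rmul_UNIV by blast
      have f1: "(\<xi> \<star> x, \<eta> \<star> x) + (\<xi> \<star> y, \<eta> \<star> y) = (\<xi> \<star> (x + y), \<eta> \<star> (x + y))"
        by (simp add: qmult_add_right)
      have f2: "(\<xi> \<star> (x + y), \<eta> \<star> (x + y)) \<in> rmul_set \<kappa> UNIV"
        unfolding \<kappa>_def rmul_UNIV by blast
      show "u \<in> D" unfolding D_def u
        apply (rule CollectI, rule exI[of _ "(\<xi> \<star> (x + y), \<eta> \<star> (x + y))"], rule exI[of _ v])
        using f1 f2 v by simp
    qed
  qed
  show ?thesis
    unfolding K_def[symmetric] D_def[symmetric] D4_def[symmetric]
    using TS DD4 O3 O5 by simp
qed

end
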